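(* Let $N\ge 2$ and $K\ge 0$ be integers and let $f_0,f_1,\ldots,f_K$ be integers such that the map $f:\{0,1,\ldots,N-1\}\to\{0,1,\ldots,N-1\}$, $f(x)=\left(\sum_{i=0}^{K} f_i x^i\right) \bmod N$, is a permutation of $\{0,1,\ldots,N-1\}$. Then the interleaver $f$ is maximum contention-free.
   Context: An interleaver of length $N$ is a permutation $f$ of $\{0,1,\ldots,N-1\}$; let $g=f^{-1}$ denote its inverse (the deinterleaver). For a positive integer $W$ dividing $N$, put $M=N/W$. The interleaver $f$ is called contention-free for window size $W$ if for both $\pi=f$ and $\pi=g$ we have $\lfloor \pi(j+tW)/W\rfloor \neq \lfloor \pi(j+vW)/W\rfloor$ for all integers $j,t,v$ with $0\le j<W$ and $0\le t<v<M$. The interleaver is called maximum contention-free if it is contention-free for every window size $W$ that is a positive divisor of $N$. Here $a \bmod N$ denotes the representative of $a$ modulo $N$ in $\{0,\ldots,N-1\}$. *)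

theory Defs
  imports Main
begin

definition interleaver :: "nat \<Rightarrow> (nat \<Rightarrow> nat) \<Rightarrow> bool" where
  "interleaver N f \<longleftrightarrow> bij_betw f {0..<N} {0..<N}"

definition deinterleaver :: "nat \<Rightarrow> (nat \<Rightarrow> nat) \<Rightarrow> (nat \<Rightarrow> nat)" where
  "deinterleaver N f = inv_into {0..<N} f"

definition cf_condition :: "nat \<Rightarrow> nat \<Rightarrow> (nat \<Rightarrow> nat) \<Rightarrow> bool" where
  "cf_condition N W pi \<longleftrightarrow>
     (\<forall>j t v. j < W \<longrightarrow> t < v \<longrightarrow> v < N div W \<longrightarrow>
        pi (j + t * W) div W \<noteq> pi (j + v * W) div W)"

definition contention_free :: "nat \<Rightarrow> nat \<Rightarrow> (nat \<Rightarrow> nat) \<Rightarrow> bool" where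
  "contention_free N W f \<longleftrightarrow>
     cf_condition N W f \<and> cf_condition N W (deinterleaver N f)"

definition max_contention_free :: "nat \<Rightarrow> (nat \<Rightarrow> nat) \<Rightarrow> bool" where
  "max_contention_free N f \<longleftrightarrow>
     (\<forall>W. 0 < W \<longrightarrow> W dvd N \<longrightarrow> contention_free N W f)"

definition poly_interleaver :: "nat \<Rightarrow> nat \<Rightarrow> (nat \<Rightarrow> int) \<Rightarrow> nat \<Rightarrow> nat" where
  "poly_interleaver N K fs x = nat ((\<Sum>i\<le>K. fs i * int x ^ i) mod int N)"

end

theory Submission
  imports Defs "HOL-Number_Theory.Cong"
begin

lemma pi_cong:
  fixes N W K :: nat and fs :: "nat \<Rightarrow> int"
  assumes "W dvd N" "x mod W = y mod W" "N > 0"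
  shows "poly_interleaver N K fs x mod W = poly_interleaver N K fs y mod W"
proof -
  let ?s = "\<lambda>x::nat. (\<Sum>i\<le>K. fs i * int x ^ i)"
  have c: "[int x = int y] (mod int W)"
    using assms(2) by (metis cong_def of_nat_mod)
  have "[?s x = ?s y] (mod int W)"
    by (intro cong_sum cong_mult cong_pow cong_refl c)
  moreover have "[?s x mod int N = ?s x] (mod int W)" "[?s y mod int N = ?s y] (mod int W)"
    using assms(1) by (auto simp: cong_def mod_mod_cancel)
  ultimately have "[?s x mod int N = ?s y mod int N] (mod int W)"
    by (meson cong_sym cong_trans)
  moreover have "?s x mod int N \<ge> 0" "?s y mod int N \<ge> 0"
    using assms(3) by simp_all
  ultimately have "[int (poly_interleaver N K fs x) = int (poly_interleaver N K fs y)] (mod int W)"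
    unfolding poly_interleaver_def by simp
  then show ?thesis unfolding cong_def by (metis of_nat_mod of_nat_eq_iff)
qed

lemma distinct_div:
  fixes a b W :: nat
  assumes "a mod W = b mod W" "a \<noteq> b"
  shows "a div W \<noteq> b div W"
  using assms by (metis div_mult_mod_eq)

lemma idx_lt:
  fixes j t W N :: nat
  assumes "j < W" "t < N div W" "W dvd N"
  shows "j + t * W < N"
proof -
  have "Suc t \<le> N div W" using assms by simp
  hence "Suc t * W \<le> N div W * W" by (rule mult_le_mono1)
  also have "\<dots> = N" using assms(3) by simp
  finally show ?thesis using assms(1) by simp
qed

theorem corollary1:
  fixes N K :: nat and fs :: "nat \<Rightarrow> int"
  assumes "N \<ge> 2"
    and "interleaver N (poly_interleaver N K fs)"
  shows "max_contention_free N (poly_interleaver N K fs)"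
  unfolding max_contention_free_def contention_free_def
proof (intro allI impI conjI)
  let ?P = "poly_interleaver N K fs"
  let ?g = "deinterleaver N ?P"
  fix W :: nat
  assume W: "0 < W" "W dvd N"
  have bij: "bij_betw ?P {0..<N} {0..<N}" using assms(2) unfolding interleaver_def .
  have inj: "inj_on ?P {0..<N}" using bij bij_betw_imp_inj_on by blast
  have img: "?P ` {0..<N} = {0..<N}" using bij bij_betw_imp_surj_on by blast
  have WN0: "N > 0" using assms(1) by simp
  have WN: "W \<le> N" using W assms(1) by (simp add: dvd_imp_le)
  show "cf_condition N W ?P"
    unfolding cf_condition_def
  proof (intro allI impI)
    fix j t v assume h: "j < W" "t < v" "v < N div W"
    have i1: "j + t * W < N" "j + v * W < N" using h W idx_lt[of j W _ N] by auto
    have "j + t * W \<noteq> j + v * W" using h W by simp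
    hence ne: "?P (j + t * W) \<noteq> ?P (j + v * W)" using inj i1 by (auto dest: inj_onD)
    have "(j + t * W) mod W = (j + v * W) mod W" by simp
    hence "?P (j + t * W) mod W = ?P (j + v * W) mod W" by (rule pi_cong[OF W(2) _ WN0])
    thus "?P (j + t * W) div W \<noteq> ?P (j + v * W) div W" using ne distinct_div by blast
  qed
  define h where "h r = ?P r mod W" for r
  have "h ` {0..<W} = {0..<W}"
  proof
    show "h ` {0..<W} \<subseteq> {0..<W}" using W by (auto simp: h_def)
    show "{0..<W} \<subseteq> h ` {0..<W}"
    proof
      fix c assume c: "c \<in> {0..<W}"
      hence "c \<in> ?P ` {0..<N}" using img WN by auto
      then obtain a where a: "a < N" "?P a = c" by auto
      have "h (a mod W) = ?P a mod W" unfolding h_def by (rule pi_cong[OF W(2) _ WN0]) simp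
      also have "\<dots> = c" using a c by simp
      finally show "c \<in> h ` {0..<W}" using W by force
    qed
  qed
  hence injh: "inj_on h {0..<W}" by (simp add: eq_card_imp_inj_on)
  have resid: "a mod W = b mod W" if "?P a mod W = ?P b mod W" for a b
  proof -
    have "h (a mod W) = ?P a mod W" unfolding h_def by (rule pi_cong[OF W(2) _ WN0]) simp
    also have "\<dots> = ?P b mod W" by (rule that)
    also have "\<dots> = h (b mod W)" unfolding h_def by (rule pi_cong[OF W(2) _ WN0]) simp
    finally have "h (a mod W) = h (b mod W)" .
    thus ?thesis using injh W by (auto dest: inj_onD)
  qed
  have gP: "?P (?g x) = x" "?g x < N" if "x < N" for x
    using that img unfolding deinterleaver_def
    by (auto intro: f_inv_into_f, metis atLeastLessThan_iff inv_into_into zero_le)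
  have injg: "inj_on ?g {0..<N}"
    unfolding deinterleaver_def using img by (metis inj_on_inv_into order_refl)
  show "cf_condition N W ?g"
    unfolding cf_condition_def
  proof (intro allI impI)
    fix j t v assume h: "j < W" "t < v" "v < N div W"
    have i1: "j + t * W < N" "j + v * W < N" using h W idx_lt[of j W _ N] by auto
    have "j + t * W \<noteq> j + v * W" using h W by simp
    hence ne: "?g (j + t * W) \<noteq> ?g (j + v * W)" using injg i1 by (auto dest: inj_onD)
    have "?P (?g (j + t * W)) mod W = ?P (?g (j + v * W)) mod W" using gP i1 by simp
    hence "?g (j + t * W) mod W = ?g (j + v * W) mod W" by (rule resid)
    thus "?g (j + t * W) div W \<noteq> ?g (j + v * W) div W" using ne distinct_div by blast
  qed
qed

end
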